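(* Let $n,m\ge 1$. Let $H,S\in C^\infty(\mathbb{R}^n)$ be real functions (the Hamiltonian and entropy functions), let $J\in\mathbb{R}^{n\times n}$ be a constant skew-symmetric matrix, let $g\in\mathbb{R}^{n\times m}$ be a constant matrix and $\tau\in\mathbb{R}^m$ a constant vector. Let $\gamma$ be a strictly positive real function of $\left(x,\tfrac{\partial H}{\partial x}(x)\right)$ and $\gamma_{\mathrm{port}}$ a strictly positive real function of $\left(x,\tfrac{\partial H}{\partial x}(x),u\right)$, $x\in\mathbb{R}^n$, $u\in\mathbb{R}^m$. Write $\{S,H\}_J(x)=\frac{\partial S}{\partial x}(x)^{\top}J\frac{\partial H}{\partial x}(x)$ and $$B(x,u)=\left(g^{\top}\tfrac{\partial S}{\partial x}(x)\right)^{\top}u-\tau^{\top}\left(g^{\top}\tfrac{\partial H}{\partial x}(x)\right)$$ (this is the bracket $\{S_{\mathrm{tot}},H_{\mathrm{tot}}\}_{J_{\mathrm{port}}}$ of $S_{\mathrm{tot}}(x,\xi)=S(x)+\tau^\top\xi$ and $H_{\mathrm{tot}}(x,\xi)=H(x)+u^\top\xi$ with respect to $J_{\mathrm{port}}=\left(\begin{smallmatrix}0&g\\-g^\top&0\end{smallmatrix}\right)$). Consider the control system $$\frac{dx}{dt}=\gamma\left(x,\tfrac{\partial H}{\partial x}\right)\{S,H\}_J\,J\frac{\partial H}{\partial x}(x)+\gamma_{\mathrm{port}}\left(x,\tfrac{\partial H}{\partial x},u\right)B(x,u)\,g\,u,$$ $$y=\gamma_{\mathrm{port}}\left(x,\tfrac{\partial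 H}{\partial x},u\right)B(x,u)\,g^{\top}\frac{\partial H}{\partial x}(x).$$ Then along every (differentiable) solution $x(t)$ corresponding to an input $u(t)\in\mathbb{R}^m$, with output $y(t)$, one has the energy balance $$\frac{d}{dt}H(x(t))=y(t)^{\top}u(t)$$ and the entropy balance $$\frac{d}{dt}S(x(t))-\tau^{\top}y(t)=\sigma_{int}+\sigma_{port},$$ where $\sigma_{int}=\gamma\left(x,\tfrac{\partial H}{\partial x}\right)\{S,H\}_J^2\ge 0$ and $\sigma_{port}=\gamma_{\mathrm{port}}\left(x,\tfrac{\partial H}{\partial x},u\right)B(x,u)^2\ge 0$.
   Context: This system is called an Irreversible Port Hamiltonian System with irreversible port map. $\sigma_{int}$ is interpreted as the internal irreversible entropy creation and $\sigma_{port}$ as the irreversible entropy creation at the interface (port) of the system. *)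

theory Defs
  imports "HOL-Analysis.Analysis"
begin

definition partial_deriv :: "'n::finite \<Rightarrow> (real^'n \<Rightarrow> real) \<Rightarrow> real^'n \<Rightarrow> real" where
  "partial_deriv i f x = frechet_derivative f (at x) (axis i 1)"

definition grad :: "(real^'n::finite \<Rightarrow> real) \<Rightarrow> real^'n \<Rightarrow> real^'n" where
  "grad f x = (\<chi> i. partial_deriv i f x)"

fun Ck :: "nat \<Rightarrow> (real^'n::finite \<Rightarrow> real) \<Rightarrow> bool" where
  "Ck 0 f = continuous_on UNIV f"
| "Ck (Suc k) f = ((\<forall>x. f differentiable (at x)) \<and> (\<forall>i. Ck k (partial_deriv i f)))"

definition smooth :: "(real^'n::finite \<Rightarrow> real) \<Rightarrow> bool" where
  "smooth f = (\<forall>k. Ck k f)"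

definition bracket_J :: "(real^'n::finite \<Rightarrow> real) \<Rightarrow> (real^'n \<Rightarrow> real) \<Rightarrow> real^'n^'n \<Rightarrow> real^'n \<Rightarrow> real" where
  "bracket_J S H J x = grad S x \<bullet> (J *v grad H x)"

definition port_bracket :: "(real^'n::finite \<Rightarrow> real) \<Rightarrow> (real^'n \<Rightarrow> real) \<Rightarrow> real^'m::finite^'n \<Rightarrow> real^'m
    \<Rightarrow> real^'n \<Rightarrow> real^'m \<Rightarrow> real" where
  "port_bracket S H g \<tau> x u = (transpose g *v grad S x) \<bullet> u - \<tau> \<bullet> (transpose g *v grad H x)"

end

theory Submission
  imports Defs
begin

lemma grad_lin:
  fixes f :: "real^'n \<Rightarrow> real"
  assumes "f differentiable (at x)"
  shows "frechet_derivative f (at x) v = grad f x \<bullet> v"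
proof -
  let ?D = "frechet_derivative f (at x)"
  have lin: "linear ?D" using assms frechet_derivative_works has_derivative_linear by blast
  have "?D v = ?D (sum (\<lambda>i. v$i *s axis i 1) UNIV)" by (simp add: basis_expansion)
  also have "\<dots> = (\<Sum>i\<in>UNIV. v$i * ?D (axis i 1))"
    using lin by (simp add: linear_sum linear_scale scalar_mult_eq_scaleR)
  also have "\<dots> = grad f x \<bullet> v" by (simp add: grad_def partial_deriv_def inner_vec_def mult.commute)
  finally show ?thesis .
qed

lemma chain:
  fixes f :: "real^'n \<Rightarrow> real"
  assumes "f differentiable (at (x t))" "(x has_vector_derivative x') (at t)"
  shows "((\<lambda>s. f (x s)) has_real_derivative (grad f (x t) \<bullet> x')) (at t)"
proof -
  let ?D = "frechet_derivative f (at (x t))"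
  have fd: "(f has_derivative ?D) (at (x t))" using assms(1) frechet_derivative_works by blast
  have lin: "linear ?D" using fd has_derivative_linear by blast
  have xd: "(x has_derivative (\<lambda>h. h *\<^sub>R x')) (at t)" using assms(2) has_vector_derivative_def by blast
  have "((f \<circ> x) has_derivative (?D \<circ> (\<lambda>h. h *\<^sub>R x'))) (at t)"
    using diff_chain_at[OF xd fd] by simp
  moreover have "(?D \<circ> (\<lambda>h. h *\<^sub>R x')) = (\<lambda>h. (grad f (x t) \<bullet> x') * h)"
    using lin by (auto simp: linear_scale grad_lin[OF assms(1)] mult.commute)
  ultimately show ?thesis by (simp add: has_field_derivative_def o_def)
qed

lemma skew_zero:
  fixes J :: "real^'n^'n"
  assumes "transpose J = - J"
  shows "v \<bullet> (J *v v) = 0"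
proof -
  have "v \<bullet> (J *v v) = (v v* J) \<bullet> v" by (simp add: dot_lmul_matrix)
  also have "\<dots> = (transpose J *v v) \<bullet> v" by simp
  also have "\<dots> = - (v \<bullet> (J *v v))" using assms
    by (simp add: matrix_vector_mult_def inner_vec_def sum_negf mult.commute)
  finally show ?thesis by simp
qed

lemma port_dot:
  fixes g :: "real^'m^'n"
  shows "v \<bullet> (g *v w) = (transpose g *v v) \<bullet> w"
  by (simp add: dot_lmul_matrix)

theorem mainTheorem1:
  fixes H S :: "real^'n \<Rightarrow> real"
    and J :: "real^'n^'n"
    and g :: "real^'m^'n"
    and \<tau> :: "real^'m"
    and \<gamma> :: "real^'n \<Rightarrow> real^'n \<Rightarrow> real"
    and \<gamma>_port :: "real^'n \<Rightarrow> real^'n \<Rightarrow> real^'m \<Rightarrow> real"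
    and x :: "real \<Rightarrow> real^'n"
    and u :: "real \<Rightarrow> real^'m"
    and y :: "real \<Rightarrow> real^'m"
    and T :: "real set"
  assumes smooth_H: "smooth H"
    and smooth_S: "smooth S"
    and skew: "transpose J = - J"
    and \<gamma>_pos: "\<And>z p. \<gamma> z p > 0"
    and \<gamma>_port_pos: "\<And>z p v. \<gamma>_port z p v > 0"
    and T_open: "open T"
    and state_eq: "\<And>t. t \<in> T \<Longrightarrow>
        (x has_vector_derivative
           ((\<gamma> (x t) (grad H (x t)) * bracket_J S H J (x t)) *\<^sub>R (J *v grad H (x t))
            + (\<gamma>_port (x t) (grad H (x t)) (u t) * port_bracket S H g \<tau> (x t) (u t)) *\<^sub>R (g *v u t)))
        (at t)"
    and output_eq: "\<And>t. t \<in> T \<Longrightarrow>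
        y t = (\<gamma>_port (x t) (grad H (x t)) (u t) * port_bracket S H g \<tau> (x t) (u t))
                *\<^sub>R (transpose g *v grad H (x t))"
  shows "\<forall>t\<in>T.
      ((\<lambda>s. H (x s)) has_real_derivative (y t \<bullet> u t)) (at t)
    \<and> (let \<sigma>_int = \<gamma> (x t) (grad H (x t)) * (bracket_J S H J (x t))\<^sup>2;
           \<sigma>_port = \<gamma>_port (x t) (grad H (x t)) (u t) * (port_bracket S H g \<tau> (x t) (u t))\<^sup>2
       in ((\<lambda>s. S (x s)) has_real_derivative (\<tau> \<bullet> y t + \<sigma>_int + \<sigma>_port)) (at t)
          \<and> \<sigma>_int \<ge> 0 \<and> \<sigma>_port \<ge> 0)"
  proof
  fix t assume tT: "t \<in> T"
  have dH: "\<And>z. H differentiable (at z)" using smooth_H unfolding smooth_def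
    by (metis Ck.simps(2) One_nat_def)
  have dS: "\<And>z. S differentiable (at z)" using smooth_S unfolding smooth_def
    by (metis Ck.simps(2) One_nat_def)
  define a where "a = \<gamma> (x t) (grad H (x t)) * bracket_J S H J (x t)"
  define b where "b = \<gamma>_port (x t) (grad H (x t)) (u t) * port_bracket S H g \<tau> (x t) (u t)"
  define v where "v = a *\<^sub>R (J *v grad H (x t)) + b *\<^sub>R (g *v u t)"
  have xd: "(x has_vector_derivative v) (at t)" using state_eq[OF tT] unfolding v_def a_def b_def .
  have yt: "y t = b *\<^sub>R (transpose g *v grad H (x t))" using output_eq[OF tT] unfolding b_def .
  have e1: "grad H (x t) \<bullet> v = y t \<bullet> u t"
  proof -
    have z: "grad H (x t) \<bullet> (J *v grad H (x t)) = 0" by (rule skew_zero[OF skew])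
    show ?thesis unfolding v_def yt
      by (simp add: inner_add_right z port_dot[of "grad H (x t)" g])
  qed
  have e2: "grad S (x t) \<bullet> v = \<tau> \<bullet> y t
      + \<gamma> (x t) (grad H (x t)) * (bracket_J S H J (x t))\<^sup>2
      + \<gamma>_port (x t) (grad H (x t)) (u t) * (port_bracket S H g \<tau> (x t) (u t))\<^sup>2"
    unfolding v_def yt a_def b_def
    by (simp add: inner_add_right port_dot power2_eq_square algebra_simps
          bracket_J_def port_bracket_def)
  show "((\<lambda>s. H (x s)) has_real_derivative (y t \<bullet> u t)) (at t)
    \<and> (let \<sigma>_int = \<gamma> (x t) (grad H (x t)) * (bracket_J S H J (x t))\<^sup>2;
           \<sigma>_port = \<gamma>_port (x t) (grad H (x t)) (u t) * (port_bracket S H g \<tau> (x t) (u t))\<^sup>2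
       in ((\<lambda>s. S (x s)) has_real_derivative (\<tau> \<bullet> y t + \<sigma>_int + \<sigma>_port)) (at t)
          \<and> \<sigma>_int \<ge> 0 \<and> \<sigma>_port \<ge> 0)"
    unfolding Let_def
    using chain[OF dH xd] chain[OF dS xd] e1 e2
      \<gamma>_pos[of "x t" "grad H (x t)"] \<gamma>_port_pos[of "x t" "grad H (x t)" "u t"]
    by simp
qed

end
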